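(* There is an absolute constant $c>0$ such that for every $n,m\ge1$ and every sequence $S\in[n]^m$, each of the four quantities $\mathit{WB}(S)$, $\mathit{SO}(S)$, $\mathit{WSF}(S)$, $\mathit{FF}(S)$ is at most $c$ times any other one of them plus $c\,m$.
   Context: Let $S=(s_1,\dots,s_m)\in[n]^m$. Logarithms are base 2. A weight function is $w:[n]\to\mathbb R_{>0}$. Write $W=\sum_{i=1}^n w(i)$ and $w[a:b]=\sum_{i=\min(a,b)}^{\max(a,b)} w(i)$. For a BST $T$ on $[n]$, $d_T(i)$ is the depth of $i$ (distance from the root, with the root at depth $0$), and $d_T(a,b)$ is the number of edges on the path between $a$ and $b$. The four bounds are: - Weighted balance: $\mathit{WB}(S)=\inf_w\sum_{j=1}^m\log\frac{W}{w(s_j)}$. - Static optimality: $\mathit{SO}(S)=\min_T\sum_{j=1}^m d_T(s_j)$. - Weighted static finger: $\mathit{WSF}(S)=\inf_{w,f}\sum_{j=1}^m\log\frac{w[f:s_j]}{\min\{w(f),w(s_j)\}}$, with $f$ ranging over $[n]$. - Fixed finger: $\mathit{FF}(S)=\min_{T,f}\sum_{j=1}^m d_T(f,s_j)$. Minima are taken over BSTs $T$ on $[n]$ and keys $f\in[n]$. *)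

theory Defs
  imports Complex_Main "HOL-Library.Tree"
begin

definition bst_on :: "nat \<Rightarrow> nat tree \<Rightarrow> bool" where
  "bst_on n T \<longleftrightarrow> inorder T = [1..<n+1]"

fun tdepth :: "nat tree \<Rightarrow> nat \<Rightarrow> nat" where
  "tdepth Leaf x = 0"
| "tdepth (Node l a r) x =
     (if x = a then 0 else if x < a then Suc (tdepth l x) else Suc (tdepth r x))"

text \<open>Number of edges on the path between keys a and b in a BST:
  descend while both keys lie strictly on the same side of the current root;
  the node where they separate is their lowest common ancestor.\<close>
fun tdist :: "nat tree \<Rightarrow> nat \<Rightarrow> nat \<Rightarrow> nat" where
  "tdist Leaf a b = 0"
| "tdist (Node l x r) a b =
     (if a < x \<and> b < x then tdist l a b
      else if x < a \<and> x < b then tdist r a b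
      else tdepth (Node l x r) a + tdepth (Node l x r) b)"

definition pos_weights :: "nat \<Rightarrow> (nat \<Rightarrow> real) set" where
  "pos_weights n = {w. \<forall>i\<in>{1..n}. w i > 0}"

definition totW :: "nat \<Rightarrow> (nat \<Rightarrow> real) \<Rightarrow> real" where
  "totW n w = (\<Sum>i=1..n. w i)"

definition wint :: "(nat \<Rightarrow> real) \<Rightarrow> nat \<Rightarrow> nat \<Rightarrow> real" where
  "wint w a b = (\<Sum>i=min a b..max a b. w i)"

definition WB :: "nat \<Rightarrow> nat list \<Rightarrow> real" where
  "WB n S = Inf ((\<lambda>w. \<Sum>x\<leftarrow>S. log 2 (totW n w / w x)) ` pos_weights n)"

definition SO :: "nat \<Rightarrow> nat list \<Rightarrow> nat" where
  "SO n S = Min ((\<lambda>T. \<Sum>x\<leftarrow>S. tdepth T x) ` {T. bst_on n T})"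

definition WSF :: "nat \<Rightarrow> nat list \<Rightarrow> real" where
  "WSF n S = Inf ((\<lambda>(w, f). \<Sum>x\<leftarrow>S. log 2 (wint w f x / min (w f) (w x)))
                   ` (pos_weights n \<times> {1..n}))"

definition FF :: "nat \<Rightarrow> nat list \<Rightarrow> nat" where
  "FF n S = Min ((\<lambda>(T, f). \<Sum>x\<leftarrow>S. tdist T f x) ` ({T. bst_on n T} \<times> {1..n}))"

end

theory Submission
  imports Defs
begin


lemma fin_inorder: "finite {T::'a tree. inorder T = xs}"
proof (induction xs rule: length_induct)
  case (1 xs)
  have sub: "{T::'a tree. inorder T = xs} \<subseteq> insert Leaf (\<Union>i\<in>{..<length xs}.
     (\<lambda>(l,r). Node l (xs!i) r) ` ({l. inorder l = take i xs} \<times> {r. inorder r = drop (Suc i) xs}))" (is "_ \<subseteq> ?R")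
  proof
    fix T :: "'a tree" assume "T \<in> {T. inorder T = xs}"
    hence T: "inorder T = xs" by simp
    show "T \<in> ?R"
    proof (cases T)
      case Leaf then show ?thesis by simp
    next
      case (Node l a r)
      let ?i = "length (inorder l)"
      have xs: "xs = inorder l @ a # inorder r" using T Node by simp
      have "?i < length xs" "take ?i xs = inorder l" "drop (Suc ?i) xs = inorder r"
        using xs by auto
      moreover have "xs ! ?i = a" using xs nth_append_length by metis
      ultimately have "T = (\<lambda>(l,r). Node l (xs!?i) r) (l,r) \<and> (l,r) \<in> {l. inorder l = take ?i xs} \<times> {r. inorder r = drop (Suc ?i) xs} \<and> ?i \<in> {..<length xs}"
        using Node by simp
      then show ?thesis by blast
    qed
  qed
  have "finite (insert Leaf (\<Union>i\<in>{..<length xs}.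
     (\<lambda>(l,r). Node l (xs!i) r) ` ({l. inorder l = take i xs} \<times> {r. inorder r = drop (Suc i) xs})))"
    using 1 by (auto intro!: finite_imageI finite_cartesian_product)
  then show ?case using sub finite_subset by blast
qed

function bld :: "(nat \<Rightarrow> real) \<Rightarrow> nat \<Rightarrow> nat \<Rightarrow> nat tree" where
  "bld w lo k = (if k = 0 then Leaf else
     (let j = (LEAST j. j = k - 1 \<or> (\<Sum>i=lo..<lo+k. w i) \<le> 2 * (\<Sum>i=lo..<lo+Suc j. w i))
      in Node (bld w lo j) (lo+j) (bld w (lo+j+1) (k-j-1))))"
  by pat_completeness auto
termination
proof (relation "measure (\<lambda>(w,lo,k). k)")
  fix w lo k j
  assume "k \<noteq> 0" and j: "j = (LEAST j. j = k - 1 \<or> (\<Sum>i=lo..<lo+k. w i) \<le> 2 * (\<Sum>i=lo..<lo+Suc j. w i))"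
  have "j \<le> k - 1" unfolding j by (rule Least_le) simp
  then show "((w, lo, j), w, lo, k) \<in> measure (\<lambda>(w,lo,k). k)"
    "((w, lo + j + 1, k - j - 1), w, lo, k) \<in> measure (\<lambda>(w,lo,k). k)" using \<open>k \<noteq> 0\<close> by auto
qed auto

declare bld.simps[simp del]

lemma bld_inorder: "inorder (bld w lo k) = [lo..<lo+k]"
proof (induction w lo k rule: bld.induct)
  case (1 w lo k)
  show ?case
  proof (cases "k = 0")
    case True then show ?thesis by (simp add: bld.simps)
  next
    case False
    define j where "j = (LEAST j. j = k - 1 \<or> (\<Sum>i=lo..<lo+k. w i) \<le> 2 * (\<Sum>i=lo..<lo+Suc j. w i))"
    have "j \<le> k - 1" unfolding j_def by (rule Least_le) simp
    have e: "bld w lo k = Node (bld w lo j) (lo+j) (bld w (lo+j+1) (k-j-1))"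
      using False by (subst bld.simps) (simp add: j_def Let_def)
    have k: "lo + k = lo+j+1+(k-j-1)" using \<open>j \<le> k - 1\<close> False by simp
    have kk: "lo+j+(k-j) = lo+k" using \<open>j \<le> k - 1\<close> False by simp
    have "[lo..<lo+k] = [lo..<lo+j] @ [lo+j..<lo+k]"
      by (rule upt_add_eq_append[of lo "lo+j" "k-j", unfolded kk]) simp
    also have "[lo+j..<lo+k] = (lo+j) # [lo+j+1..<lo+k]"
    proof -
      have "lo + j < lo + k" using \<open>j \<le> k - 1\<close> False by simp
      then show ?thesis by (simp add: upt_conv_Cons)
    qed
    finally have L: "[lo..<lo+k] = [lo..<lo+j] @ (lo+j) # [lo+j+1..<lo+k]" .
    have IH1: "inorder (bld w lo j) = [lo..<lo+j]"
      using "1.IH"(1)[OF False j_def] .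
    have IH2: "inorder (bld w (lo+j+1) (k-j-1)) = [lo+j+1..<lo+k]"
      using "1.IH"(2)[OF False j_def] unfolding k[symmetric] .
    show ?thesis unfolding e by (simp only: inorder.simps IH1 IH2 L append.simps)
  qed
qed

lemma bld_depth: "(\<forall>i\<in>{lo..<lo+k}. w i > 0) \<Longrightarrow> x \<in> {lo..<lo+k} \<Longrightarrow>
   2 ^ tdepth (bld w lo k) x * w x \<le> (\<Sum>i=lo..<lo+k. w i)"
proof (induction w lo k rule: bld.induct)
  case (1 w lo k)
  have False: "k \<noteq> 0" using 1(4) by auto
  define tot where "tot = (\<Sum>i=lo..<lo+k. w i)"
  define j where "j = (LEAST j. j = k - 1 \<or> (\<Sum>i=lo..<lo+k. w i) \<le> 2 * (\<Sum>i=lo..<lo+Suc j. w i))"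
  have jk: "j \<le> k - 1" unfolding j_def by (rule Least_le) simp
  have jP: "j = k - 1 \<or> tot \<le> 2 * (\<Sum>i=lo..<lo+Suc j. w i)"
    unfolding j_def tot_def by (rule LeastI[of _ "k-1"]) simp
  have e: "bld w lo k = Node (bld w lo j) (lo+j) (bld w (lo+j+1) (k-j-1))"
    using False by (subst bld.simps) (simp add: j_def Let_def)
  have nn: "\<And>a b. lo \<le> a \<Longrightarrow> b \<le> lo + k \<Longrightarrow> 0 \<le> (\<Sum>i=a..<b. w i)"
    using 1(3) by (intro sum_nonneg) (auto intro: less_imp_le)
  have split1: "tot = (\<Sum>i=lo..<lo+j. w i) + w (lo+j) + (\<Sum>i=lo+j+1..<lo+k. w i)"
  proof -
    have "tot = (\<Sum>i=lo..<lo+j. w i) + (\<Sum>i=lo+j..<lo+k. w i)"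
      unfolding tot_def using jk False by (intro sum.atLeastLessThan_concat[symmetric]) auto
    moreover have "(\<Sum>i=lo+j..<lo+k. w i) = w (lo+j) + (\<Sum>i=lo+j+1..<lo+k. w i)"
      using jk False by (subst sum.atLeast_Suc_lessThan) auto
    ultimately show ?thesis by simp
  qed
  have left: "2 * (\<Sum>i=lo..<lo+j. w i) \<le> tot"
  proof (cases "j = 0")
    case True then show ?thesis using nn[of lo "lo+k"] unfolding tot_def by simp
  next
    case False
    have "j - 1 < j" using False by simp
    from not_less_Least[OF this[unfolded j_def]]
    have "\<not> tot \<le> 2 * (\<Sum>i=lo..<lo+Suc (j-1). w i)" unfolding tot_def j_def[symmetric] by blast
    then show ?thesis using False by simp
  qed
  have right: "2 * (\<Sum>i=lo+j+1..<lo+k. w i) \<le> tot"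
  proof (cases "j = k - 1")
    case True then show ?thesis using nn[of lo "lo+k"] False unfolding tot_def by simp
  next
    case False2: False
    then have "tot \<le> 2 * (\<Sum>i=lo..<lo+Suc j. w i)" using jP by simp
    moreover have "(\<Sum>i=lo..<lo+Suc j. w i) = (\<Sum>i=lo..<lo+j. w i) + w (lo+j)" by simp
    ultimately show ?thesis using split1 by linarith
  qed
  have wpos: "w (lo+j) \<ge> 0" using 1(3) jk False by (auto intro: less_imp_le)
  consider "x = lo + j" | "x < lo + j" | "x > lo + j" by linarith
  then show ?case
  proof cases
    case 1
    then show ?thesis using e split1 nn[of lo "lo+j"] nn[of "lo+j+1" "lo+k"] jk unfolding tot_def by simp
  next
    case 2
    have IH: "2 ^ tdepth (bld w lo j) x * w x \<le> (\<Sum>i=lo..<lo+j. w i)"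
    proof (rule "1.IH"(1)[OF False j_def])
      show "\<forall>i\<in>{lo..<lo + j}. 0 < w i" using "1.prems"(1) jk False by auto
      show "x \<in> {lo..<lo + j}" using "1.prems"(2) 2 by auto
    qed
    have "2 ^ tdepth (bld w lo k) x * w x = 2 * (2 ^ tdepth (bld w lo j) x * w x)"
      using e 2 by simp
    then show ?thesis using IH left unfolding tot_def by linarith
  next
    case 3
    have eq: "lo+j+1+(k-j-1) = lo + k" using jk False by simp
    have IH0: "2 ^ tdepth (bld w (lo+j+1) (k-j-1)) x * w x \<le> (\<Sum>i=lo+j+1..<lo+j+1+(k-j-1). w i)"
    proof (rule "1.IH"(2)[OF False j_def])
      show "\<forall>i\<in>{lo+j+1..<lo+j+1+(k-j-1)}. 0 < w i" unfolding eq using "1.prems"(1) by auto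
      show "x \<in> {lo+j+1..<lo+j+1+(k-j-1)}" unfolding eq using "1.prems"(2) 3 by auto
    qed
    have IH: "2 ^ tdepth (bld w (lo+j+1) (k-j-1)) x * w x \<le> (\<Sum>i=lo+j+1..<lo+k. w i)"
      using IH0 unfolding eq .
    have "2 ^ tdepth (bld w lo k) x * w x = 2 * (2 ^ tdepth (bld w (lo+j+1) (k-j-1)) x * w x)"
      using e 3 by simp
    then show ?thesis using IH right unfolding tot_def by linarith
  qed
qed



lemma tdist_self: "tdist T a a = 0"
  by (induction T) auto

lemma Kbound: "sorted_wrt (<) (inorder T) \<Longrightarrow> (\<Sum>y\<leftarrow>inorder T. (1/8::real)^tdepth T y) \<le> 4/3"
proof (induction T)
  case Leaf then show ?case by simp
next
  case (Node l a r)
  have sl: "sorted_wrt (<) (inorder l)" and sr: "sorted_wrt (<) (inorder r)"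
    and la: "\<forall>y\<in>set (inorder l). y < a" and ra: "\<forall>y\<in>set (inorder r). a < y"
    using Node.prems by (auto simp: sorted_wrt_append)
  have "(\<Sum>y\<leftarrow>inorder l. (1/8::real)^tdepth (Node l a r) y) = (\<Sum>y\<leftarrow>inorder l. (1/8) * (1/8)^tdepth l y)"
    by (rule arg_cong[of _ _ sum_list], rule map_cong) (use la in auto)
  also have "\<dots> = (1/8) * (\<Sum>y\<leftarrow>inorder l. (1/8)^tdepth l y)" by (rule sum_list_const_mult)
  finally have L: "(\<Sum>y\<leftarrow>inorder l. (1/8::real)^tdepth (Node l a r) y) \<le> 1/6"
    using Node.IH(1)[OF sl] by simp
  have "(\<Sum>y\<leftarrow>inorder r. (1/8::real)^tdepth (Node l a r) y) = (\<Sum>y\<leftarrow>inorder r. (1/8) * (1/8)^tdepth r y)"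
    by (rule arg_cong[of _ _ sum_list], rule map_cong) (use ra in auto)
  also have "\<dots> = (1/8) * (\<Sum>y\<leftarrow>inorder r. (1/8)^tdepth r y)" by (rule sum_list_const_mult)
  finally have R: "(\<Sum>y\<leftarrow>inorder r. (1/8::real)^tdepth (Node l a r) y) \<le> 1/6"
    using Node.IH(2)[OF sr] by simp
  show ?case using L R by simp
qed

lemma Gbound: "sorted_wrt (<) (inorder T) \<Longrightarrow> f \<in> set_tree T \<Longrightarrow>
  (\<Sum>y\<leftarrow>inorder T. (1/8::real)^tdist T f y) \<le> 3/2 - (1/6) * (1/8)^tdepth T f"
proof (induction T)
  case Leaf then show ?case by simp
next
  case (Node l a r)
  have sl: "sorted_wrt (<) (inorder l)" and sr: "sorted_wrt (<) (inorder r)"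
    and la: "\<forall>y\<in>set (inorder l). y < a" and ra: "\<forall>y\<in>set (inorder r). a < y"
    using Node.prems by (auto simp: sorted_wrt_append)
  let ?T = "Node l a r"
  have Kl: "(\<Sum>y\<leftarrow>inorder l. (1/8::real)^tdepth ?T y) = (1/8) * (\<Sum>y\<leftarrow>inorder l. (1/8)^tdepth l y)"
  proof -
    have "(\<Sum>y\<leftarrow>inorder l. (1/8::real)^tdepth ?T y) = (\<Sum>y\<leftarrow>inorder l. (1/8) * (1/8)^tdepth l y)"
      by (rule arg_cong[of _ _ sum_list], rule map_cong) (use la in auto)
    also have "\<dots> = (1/8) * (\<Sum>y\<leftarrow>inorder l. (1/8)^tdepth l y)" by (rule sum_list_const_mult)
    finally show ?thesis .
  qed
  have Kr: "(\<Sum>y\<leftarrow>inorder r. (1/8::real)^tdepth ?T y) = (1/8) * (\<Sum>y\<leftarrow>inorder r. (1/8)^tdepth r y)"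
  proof -
    have "(\<Sum>y\<leftarrow>inorder r. (1/8::real)^tdepth ?T y) = (\<Sum>y\<leftarrow>inorder r. (1/8) * (1/8)^tdepth r y)"
      by (rule arg_cong[of _ _ sum_list], rule map_cong) (use ra in auto)
    also have "\<dots> = (1/8) * (\<Sum>y\<leftarrow>inorder r. (1/8)^tdepth r y)" by (rule sum_list_const_mult)
    finally show ?thesis .
  qed
  have KL: "(\<Sum>y\<leftarrow>inorder l. (1/8::real)^tdepth l y) \<le> 4/3" using Kbound[OF sl] .
  have KR: "(\<Sum>y\<leftarrow>inorder r. (1/8::real)^tdepth r y) \<le> 4/3" using Kbound[OF sr] .
  have KLn: "0 \<le> (\<Sum>y\<leftarrow>inorder l. (1/8::real)^tdepth l y)" by (rule sum_list_nonneg) auto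
  have KRn: "0 \<le> (\<Sum>y\<leftarrow>inorder r. (1/8::real)^tdepth r y)" by (rule sum_list_nonneg) auto
  consider "f = a" | "f < a" | "a < f" by linarith
  then show ?case
  proof cases
    case 1
    have "(\<Sum>y\<leftarrow>inorder ?T. (1/8::real)^tdist ?T f y) = (\<Sum>y\<leftarrow>inorder ?T. (1/8)^tdepth ?T y)"
      by (rule arg_cong[of _ _ sum_list], rule map_cong) (use 1 in auto)
    also have "\<dots> \<le> 4/3" by (rule Kbound[OF Node.prems(1)])
    finally show ?thesis using 1 by simp
  next
    case 2
    have fl: "f \<in> set_tree l" using Node.prems(2) 2 ra by auto
    define d where "d = tdepth l f"
    have dT: "tdepth ?T f = Suc d" using 2 d_def by simp
    have A: "(\<Sum>y\<leftarrow>inorder l. (1/8::real)^tdist ?T f y) = (\<Sum>y\<leftarrow>inorder l. (1/8)^tdist l f y)"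
      by (rule arg_cong[of _ _ sum_list], rule map_cong) (use la 2 in auto)
    have B: "(\<Sum>y\<leftarrow>inorder r. (1/8::real)^tdist ?T f y) = (\<Sum>y\<leftarrow>inorder r. (1/8)^(Suc d) * (1/8)^tdepth ?T y)"
      by (rule arg_cong[of _ _ sum_list], rule map_cong) (use ra 2 dT in \<open>auto simp: power_add\<close>)
    have C: "(1/8::real)^tdist ?T f a = (1/8)^Suc d" using 2 dT by simp
    have IH: "(\<Sum>y\<leftarrow>inorder l. (1/8::real)^tdist l f y) \<le> 3/2 - (1/6) * (1/8)^d"
      using Node.IH(1)[OF sl fl] d_def by simp
    have "(\<Sum>y\<leftarrow>inorder ?T. (1/8::real)^tdist ?T f y) =
        (\<Sum>y\<leftarrow>inorder l. (1/8)^tdist l f y) + (1/8)^Suc d * (1 + (1/8) * (\<Sum>y\<leftarrow>inorder r. (1/8)^tdepth r y))"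
    proof -
      have split: "\<And>g::nat\<Rightarrow>real. (\<Sum>y\<leftarrow>inorder ?T. g y) = (\<Sum>y\<leftarrow>inorder l. g y) + g a + (\<Sum>y\<leftarrow>inorder r. g y)"
        by simp
      have B2: "(\<Sum>y\<leftarrow>inorder r. (1/8::real)^tdist ?T f y) = (1/8)^Suc d * ((1/8) * (\<Sum>y\<leftarrow>inorder r. (1/8)^tdepth r y))"
        unfolding B sum_list_const_mult Kr ..
      show ?thesis unfolding split A B2 C by (simp add: algebra_simps)
    qed
    also have "\<dots> \<le> 3/2 - (1/6) * (1/8)^d + (1/8)^Suc d * (1 + (1/8) * (4/3))"
      using IH KR by (intro add_mono mult_left_mono) auto
    also have "\<dots> = 3/2 - (1/6) * (1/8)^tdepth ?T f" using dT by simp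
    finally show ?thesis .
  next
    case 3
    have fr: "f \<in> set_tree r" using Node.prems(2) 3 la by auto
    define d where "d = tdepth r f"
    have dT: "tdepth ?T f = Suc d" using 3 d_def by simp
    have A: "(\<Sum>y\<leftarrow>inorder r. (1/8::real)^tdist ?T f y) = (\<Sum>y\<leftarrow>inorder r. (1/8)^tdist r f y)"
      by (rule arg_cong[of _ _ sum_list], rule map_cong) (use ra 3 in auto)
    have B: "(\<Sum>y\<leftarrow>inorder l. (1/8::real)^tdist ?T f y) = (\<Sum>y\<leftarrow>inorder l. (1/8)^(Suc d) * (1/8)^tdepth ?T y)"
      by (rule arg_cong[of _ _ sum_list], rule map_cong) (use la 3 dT in \<open>auto simp: power_add\<close>)
    have C: "(1/8::real)^tdist ?T f a = (1/8)^Suc d" using 3 dT by simp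
    have IH: "(\<Sum>y\<leftarrow>inorder r. (1/8::real)^tdist r f y) \<le> 3/2 - (1/6) * (1/8)^d"
      using Node.IH(2)[OF sr fr] d_def by simp
    have "(\<Sum>y\<leftarrow>inorder ?T. (1/8::real)^tdist ?T f y) =
        (\<Sum>y\<leftarrow>inorder r. (1/8)^tdist r f y) + (1/8)^Suc d * (1 + (1/8) * (\<Sum>y\<leftarrow>inorder l. (1/8)^tdepth l y))"
    proof -
      have split: "\<And>g::nat\<Rightarrow>real. (\<Sum>y\<leftarrow>inorder ?T. g y) = (\<Sum>y\<leftarrow>inorder l. g y) + g a + (\<Sum>y\<leftarrow>inorder r. g y)"
        by simp
      have B2: "(\<Sum>y\<leftarrow>inorder l. (1/8::real)^tdist ?T f y) = (1/8)^Suc d * ((1/8) * (\<Sum>y\<leftarrow>inorder l. (1/8)^tdepth l y))"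
        unfolding B sum_list_const_mult Kl ..
      show ?thesis unfolding split A B2 C by (simp add: algebra_simps)
    qed
    also have "\<dots> \<le> 3/2 - (1/6) * (1/8)^d + (1/8)^Suc d * (1 + (1/8) * (4/3))"
      using IH KL by (intro add_mono mult_left_mono) auto
    also have "\<dots> = 3/2 - (1/6) * (1/8)^tdepth ?T f" using dT by simp
    finally show ?thesis .
  qed
qed



lemma tele: "(\<forall>i\<le>(K::nat). a i > (0::real)) \<Longrightarrow>
  (\<Sum>k=1..K. a k * a 0 / (\<Sum>i=0..k. a i)^2) \<le> 1 - a 0 / (\<Sum>i=0..K. a i)"
proof (induction K)
  case 0 then show ?case by simp
next
  case (Suc K)
  define P where "P = (\<Sum>i=0..K. a i)"
  have a0: "a 0 > 0" using Suc.prems by auto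
  have aK: "a (Suc K) > 0" using Suc.prems by auto
  have P: "P > 0" unfolding P_def using Suc.prems by (intro sum_pos) auto
  have IH: "(\<Sum>k=1..K. a k * a 0 / (\<Sum>i=0..k. a i)^2) \<le> 1 - a 0 / P"
    using Suc.IH Suc.prems P_def by auto
  have PS: "(\<Sum>i=0..Suc K. a i) = P + a (Suc K)" unfolding P_def by simp
  have step: "a (Suc K) * a 0 / (P + a (Suc K))^2 \<le> a 0 / P - a 0 / (P + a (Suc K))"
  proof -
    have "a 0 / P - a 0 / (P + a (Suc K)) = a (Suc K) * a 0 / (P * (P + a (Suc K)))"
      using P aK by (simp add: field_simps)
    moreover have "a (Suc K) * a 0 / (P + a (Suc K))^2 \<le> a (Suc K) * a 0 / (P * (P + a (Suc K)))"
      using P aK a0 by (intro divide_left_mono) (auto simp: power2_eq_square intro!: mult_right_mono mult_pos_pos)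
    ultimately show ?thesis by simp
  qed
  have "(\<Sum>k=1..Suc K. a k * a 0 / (\<Sum>i=0..k. a i)^2) =
     (\<Sum>k=1..K. a k * a 0 / (\<Sum>i=0..k. a i)^2) + a (Suc K) * a 0 / (P + a (Suc K))^2"
    using PS by simp
  also have "\<dots> \<le> 1 - a 0 / (P + a (Suc K))" using IH step by linarith
  finally show ?case using PS by simp
qed

lemma tele1: "(\<forall>i\<le>(K::nat). a i > (0::real)) \<Longrightarrow>
  (\<Sum>k=1..K. a k * a 0 / (\<Sum>i=0..k. a i)^2) \<le> 1"
proof -
  assume h: "\<forall>i\<le>K. a i > (0::real)"
  have "a 0 / (\<Sum>i=0..K. a i) \<ge> 0" using h by (intro divide_nonneg_nonneg sum_nonneg) (auto intro: less_imp_le)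
  then show ?thesis using tele[OF h] by linarith
qed

lemma right_part:
  assumes f: "f \<in> {1..n}" and w: "\<forall>i\<in>{1..n}. w i > 0"
  shows "(\<Sum>x\<in>{f<..n}. w x * w f / (wint w f x)^2) \<le> 1"
proof -
  define a where "a i = w (f + i)" for i
  have "(\<Sum>k=1..n-f. a k * a 0 / (\<Sum>i=0..k. a i)^2) = (\<Sum>x\<in>{f<..n}. w x * w f / (wint w f x)^2)"
  proof (rule sum.reindex_bij_witness[where j="\<lambda>k. f + k" and i="\<lambda>x. x - f"])
    fix k assume k: "k \<in> {1..n-f}"
    have "wint w f (f+k) = (\<Sum>i=f..f+k. w i)" unfolding wint_def by simp
    also have "\<dots> = (\<Sum>i=0..k. a i)" unfolding a_def
      using sum.shift_bounds_cl_nat_ivl[of w 0 f k] by (simp add: add.commute)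
    finally show "w (f+k) * w f / (wint w f (f+k))^2 = a k * a 0 / (\<Sum>i=0..k. a i)^2"
      unfolding a_def by simp
  qed (use f in auto)
  then have "(\<Sum>x\<in>{f<..n}. w x * w f / (wint w f x)^2) = (\<Sum>k=1..n-f. a k * a 0 / (\<Sum>i=0..k. a i)^2)" by simp
  also have "\<dots> \<le> 1" by (rule tele1) (use w f in \<open>auto simp: a_def\<close>)
  finally show ?thesis .
qed

lemma left_part:
  assumes f: "f \<in> {1..n}" and w: "\<forall>i\<in>{1..n}. w i > 0"
  shows "(\<Sum>x\<in>{1..<f}. w x * w f / (wint w f x)^2) \<le> 1"
proof -
  define a where "a i = w (f - i)" for i
  have "(\<Sum>k=1..f-1. a k * a 0 / (\<Sum>i=0..k. a i)^2) = (\<Sum>x\<in>{1..<f}. w x * w f / (wint w f x)^2)"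
  proof (rule sum.reindex_bij_witness[where i="\<lambda>k. f - k" and j="\<lambda>x. f - x"])
    fix k assume k: "k \<in> {1..f-1}"
    have "wint w f (f-k) = (\<Sum>i=f-k..f. w i)" unfolding wint_def by simp
    also have "\<dots> = (\<Sum>i=0..k. a i)" unfolding a_def
      by (rule sum.reindex_bij_witness[where i="\<lambda>i. f - i" and j="\<lambda>i. f - i"]) (use k in auto)
    finally show "w (f-k) * w f / (wint w f (f-k))^2 = a k * a 0 / (\<Sum>i=0..k. a i)^2"
      unfolding a_def by simp
  qed (use f in auto)
  then have "(\<Sum>x\<in>{1..<f}. w x * w f / (wint w f x)^2) = (\<Sum>k=1..f-1. a k * a 0 / (\<Sum>i=0..k. a i)^2)" by simp
  also have "\<dots> \<le> 1"
  proof (rule tele1)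
    show "\<forall>i\<le>f-1. 0 < a i" unfolding a_def
    proof (intro allI impI)
      fix i assume "i \<le> f-1"
      then have "f - i \<in> {1..n}" using f by auto
      then show "0 < w (f-i)" using w by blast
    qed
  qed
  finally show ?thesis .
qed

lemma fingersum:
  assumes f: "f \<in> {1..n}" and w: "\<forall>i\<in>{1..n}. w i > 0"
  shows "(\<Sum>x=1..n. w x * w f / (wint w f x)^2) \<le> 3"
proof -
  have wf: "w f > 0" using w f by blast
  have U: "{1..n} = {1..<f} \<union> ({f} \<union> {f<..n})" using f by auto
  have "(\<Sum>x=1..n. w x * w f / (wint w f x)^2) =
     (\<Sum>x\<in>{1..<f}. w x * w f / (wint w f x)^2) + (w f * w f / (wint w f f)^2 + (\<Sum>x\<in>{f<..n}. w x * w f / (wint w f x)^2))"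
    unfolding U by (subst sum.union_disjoint, auto)+
  moreover have "w f * w f / (wint w f f)^2 = 1" using wf by (simp add: wint_def power2_eq_square)
  ultimately show ?thesis using left_part[OF f w] right_part[OF f w] by linarith
qed



lemma aux_q:
  fixes W wx wf I m :: real
  assumes m: "0 < m" "m \<le> wx" "m \<le> wf" and I: "0 < I" and W: "W \<le> 3"
  shows "W / (wx * wf / I^2) \<le> 4 * (I / m)^2"
proof -
  have wx: "0 < wx" and wf: "0 < wf" using m by auto
  have p: "0 < wx * wf" using wx wf by simp
  have mm: "m * m \<le> wx * wf" by (rule mult_mono) (use m in auto)
  have "W / (wx * wf / I^2) = W * I^2 / (wx * wf)" using I p by (simp add: field_simps)
  also have "\<dots> \<le> 3 * I^2 / (wx * wf)" using W p I by (intro divide_right_mono mult_right_mono) auto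
  also have "\<dots> \<le> 3 * I^2 / (m * m)" using mm m I by (intro divide_left_mono) auto
  also have "\<dots> \<le> 4 * I^2 / (m * m)" using m I by (intro divide_right_mono) auto
  also have "\<dots> = 4 * (I / m)^2" by (simp add: power2_eq_square)
  finally show ?thesis .
qed

lemma aux_log:
  fixes t q :: real
  assumes t: "0 < t" and q: "0 < q" and le: "t \<le> 4 * q^2"
  shows "log 2 t \<le> 2 + 2 * log 2 q"
proof -
  have "log 2 t \<le> log 2 (4 * q^2)" using t le by (intro log_mono) auto
  also have "log 2 (4 * q^2) = log 2 4 + log 2 (q^2)" using q by (intro log_mult_pos) auto
  also have "log 2 (q^2) = 2 * log 2 q" using q by (simp add: log_nat_power)
  also have "log 2 (4::real) = log 2 (2^2)" by simp
  also have "\<dots> = 2" by (subst log_nat_power) auto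
  finally show ?thesis .
qed



lemma real_sum_list: "real (\<Sum>x\<leftarrow>S. g x) = (\<Sum>x\<leftarrow>S. real (g x))"
  by (induction S) auto

lemma sum_list_affine: "(\<Sum>x\<leftarrow>S. c + d * g x) = c * real (length S) + d * (\<Sum>x\<leftarrow>S. (g x::real))"
  by (induction S) (auto simp: algebra_simps)

lemma fin_bst: "finite {T. bst_on n T}"
  unfolding bst_on_def by (rule fin_inorder)

lemma bld_bst: "bst_on n (bld w 1 n)"
  unfolding bst_on_def using bld_inorder[of w 1 n] by simp

lemma totW_list: "totW n w = (\<Sum>y\<leftarrow>[1..<n+1]. w y)"
proof -
  have "{1..n} = set [1..<n+1]" by auto
  then show ?thesis unfolding totW_def by (simp only: sum_set_upt_conv_sum_list_nat)
qed

lemma WB_term_nonneg: "w \<in> pos_weights n \<Longrightarrow> x \<in> {1..n} \<Longrightarrow> 0 \<le> log 2 (totW n w / w x)"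
proof -
  assume w: "w \<in> pos_weights n" and x: "x \<in> {1..n}"
  have wx: "w x > 0" using w x unfolding pos_weights_def by blast
  have "w x \<le> totW n w" unfolding totW_def
    by (rule member_le_sum) (use w x in \<open>auto simp: pos_weights_def intro: less_imp_le\<close>)
  then show ?thesis using wx by simp
qed

lemma WB_lower: "set S \<subseteq> {1..n} \<Longrightarrow> w \<in> pos_weights n \<Longrightarrow> WB n S \<le> (\<Sum>x\<leftarrow>S. log 2 (totW n w / w x))"
  unfolding WB_def
proof (rule cInf_lower)
  assume S: "set S \<subseteq> {1..n}"
  show "bdd_below ((\<lambda>w. \<Sum>x\<leftarrow>S. log 2 (totW n w / w x)) ` pos_weights n)"
  proof (rule bdd_belowI[of _ 0])
    fix v assume "v \<in> (\<lambda>w. \<Sum>x\<leftarrow>S. log 2 (totW n w / w x)) ` pos_weights n"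
    then obtain ww where ww: "ww \<in> pos_weights n" and v: "v = (\<Sum>x\<leftarrow>S. log 2 (totW n ww / ww x))" by blast
    show "0 \<le> v" unfolding v
    proof (rule sum_list_nonneg)
      fix y assume "y \<in> set (map (\<lambda>x. log 2 (totW n ww / ww x)) S)"
      then obtain x where x: "x \<in> set S" and y: "y = log 2 (totW n ww / ww x)" by auto
      have "x \<in> {1..n}" using x S by auto
      then show "0 \<le> y" unfolding y by (rule WB_term_nonneg[OF ww])
    qed
  qed
qed auto

lemma SO_le_WB:
  assumes S: "set S \<subseteq> {1..n}"
  shows "real (SO n S) \<le> WB n S"
  unfolding WB_def
proof (rule cInf_greatest)
  have "(\<lambda>_. 1::real) \<in> pos_weights n" by (simp add: pos_weights_def)
  then show "(\<lambda>w. \<Sum>x\<leftarrow>S. log 2 (totW n w / w x)) ` pos_weights n \<noteq> {}"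
    by blast
  fix v assume "v \<in> (\<lambda>w. \<Sum>x\<leftarrow>S. log 2 (totW n w / w x)) ` pos_weights n"
  then obtain w where w: "w \<in> pos_weights n" and v: "v = (\<Sum>x\<leftarrow>S. log 2 (totW n w / w x))" by blast
  let ?T = "bld w 1 n"
  have "SO n S \<le> (\<Sum>x\<leftarrow>S. tdepth ?T x)" unfolding SO_def
    using fin_bst bld_bst by (intro Min_le) auto
  then have "real (SO n S) \<le> real (\<Sum>x\<leftarrow>S. tdepth ?T x)" by (simp only: of_nat_le_iff)
  also have "\<dots> = (\<Sum>x\<leftarrow>S. real (tdepth ?T x))" by (rule real_sum_list)
  also have "\<dots> \<le> v" unfolding v
  proof (rule sum_list_mono)
    fix x assume "x \<in> set S"
    then have x: "x \<in> {1..n}" using S by auto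
    have wpos: "\<forall>i\<in>{1..<1+n}. w i > 0" using w unfolding pos_weights_def by auto
    have wx: "w x > 0" using w x unfolding pos_weights_def by blast
    have "2 ^ tdepth ?T x * w x \<le> (\<Sum>i=1..<1+n. w i)"
      using bld_depth[OF wpos] x by auto
    also have "(\<Sum>i=1..<1+n. w i) = totW n w" unfolding totW_def
      by (simp add: atLeastLessThanSuc_atLeastAtMost)
    finally have "2 ^ tdepth ?T x \<le> totW n w / w x" using wx by (simp add: pos_le_divide_eq)
    moreover have "totW n w / w x > 0" using wx calculation
      by (smt (verit, best) zero_less_power)
    ultimately show "real (tdepth ?T x) \<le> log 2 (totW n w / w x)"
      by (simp add: le_log_iff powr_realpow)
  qed
  finally show "real (SO n S) \<le> v" .
qed

lemma FF_le_SO: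
  assumes n: "n \<ge> 1"
  shows "FF n S \<le> SO n S"
proof -
  have "SO n S \<in> (\<lambda>T. \<Sum>x\<leftarrow>S. tdepth T x) ` {T. bst_on n T}"
    unfolding SO_def using fin_bst bld_bst by (intro Min_in) auto
  then obtain T where T: "bst_on n T" and so: "SO n S = (\<Sum>x\<leftarrow>S. tdepth T x)" by blast
  have "inorder T \<noteq> []" using T n unfolding bst_on_def by simp
  then obtain l a r where Tn: "T = Node l a r" by (cases T) auto
  have "a \<in> set (inorder T)" using Tn by simp
  then have a: "a \<in> {1..n}" using T unfolding bst_on_def by auto
  have "FF n S \<le> (\<Sum>x\<leftarrow>S. tdist T a x)" unfolding FF_def
    using fin_bst T a by (intro Min_le) (auto intro!: image_eqI[of _ _ "(T,a)"])
  also have "(\<Sum>x\<leftarrow>S. tdist T a x) = (\<Sum>x\<leftarrow>S. tdepth T x)"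
    using Tn by simp
  finally show ?thesis using so by simp
qed

lemma WSF_term_nonneg:
  assumes w: "w \<in> pos_weights n" and f: "f \<in> {1..n}" and x: "x \<in> {1..n}"
  shows "0 \<le> log 2 (wint w f x / min (w f) (w x))"
proof -
  have wx: "w x > 0" and wf: "w f > 0" using w x f unfolding pos_weights_def by auto
  have nn: "\<forall>i\<in>{min f x..max f x}. 0 \<le> w i"
  proof
    fix i assume "i \<in> {min f x..max f x}"
    then have "i \<in> {1..n}" using f x by auto
    then show "0 \<le> w i" using w unfolding pos_weights_def by (auto intro: less_imp_le)
  qed
  have "w x \<le> wint w f x" unfolding wint_def
    by (rule member_le_sum) (use nn in auto)
  then have "min (w f) (w x) \<le> wint w f x" by linarith
  moreover have mp: "min (w f) (w x) > 0" using wx wf by simp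
  ultimately have "1 \<le> wint w f x / min (w f) (w x)" by simp
  moreover have "0 < wint w f x / min (w f) (w x)" using calculation by linarith
  ultimately show ?thesis by simp
qed

lemma WSF_set_nonneg:
  assumes S: "set S \<subseteq> {1..n}"
    and v: "v \<in> (\<lambda>(w, f). \<Sum>x\<leftarrow>S. log 2 (wint w f x / min (w f) (w x))) ` (pos_weights n \<times> {1..n})"
  shows "0 \<le> v"
proof -
  from v obtain p where p: "p \<in> pos_weights n \<times> {1..n}"
    and vp: "v = (\<lambda>(w, f). \<Sum>x\<leftarrow>S. log 2 (wint w f x / min (w f) (w x))) p" by (rule imageE)
  obtain w f where pwf: "p = (w, f)" by (cases p)
  have w: "w \<in> pos_weights n" and f: "f \<in> {1..n}" using p unfolding pwf by auto
  have vv: "v = (\<Sum>x\<leftarrow>S. log 2 (wint w f x / min (w f) (w x)))" using vp unfolding pwf by simp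
  show ?thesis unfolding vv
  proof (rule sum_list_nonneg)
    fix y assume "y \<in> set (map (\<lambda>x. log 2 (wint w f x / min (w f) (w x))) S)"
    then obtain x where x: "x \<in> set S" and y: "y = log 2 (wint w f x / min (w f) (w x))" by auto
    have "x \<in> {1..n}" using x S by auto
    then show "0 \<le> y" unfolding y by (rule WSF_term_nonneg[OF w f])
  qed
qed

lemma WSF_set_ne:
  assumes n: "n \<ge> 1"
  shows "(\<lambda>(w, f). \<Sum>x\<leftarrow>S. log 2 (wint w f x / min (w f) (w x))) ` (pos_weights n \<times> {1..n}) \<noteq> {}"
proof -
  have "(\<lambda>_. 1::real) \<in> pos_weights n" by (simp add: pos_weights_def)
  then have "((\<lambda>_. 1::real), 1) \<in> pos_weights n \<times> {1..n}" using n by simp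
  then have "pos_weights n \<times> {1..n} \<noteq> {}" by blast
  then show ?thesis unfolding image_is_empty .
qed

lemma WSF_nonneg:
  assumes S: "set S \<subseteq> {1..n}" and n: "n \<ge> 1"
  shows "0 \<le> WSF n S"
  unfolding WSF_def
  by (rule cInf_greatest[OF WSF_set_ne[OF n]]) (rule WSF_set_nonneg[OF S])

lemma WSF_lower:
  assumes S: "set S \<subseteq> {1..n}" and w: "w \<in> pos_weights n" and f: "f \<in> {1..n}"
  shows "WSF n S \<le> (\<Sum>x\<leftarrow>S. log 2 (wint w f x / min (w f) (w x)))"
  unfolding WSF_def
proof (rule cInf_lower)
  show "bdd_below ((\<lambda>(w, f). \<Sum>x\<leftarrow>S. log 2 (wint w f x / min (w f) (w x))) ` (pos_weights n \<times> {1..n}))"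
    by (rule bdd_belowI[of _ 0]) (rule WSF_set_nonneg[OF S])
  have "(w, f) \<in> pos_weights n \<times> {1..n}" using w f by simp
  then show "(\<Sum>x\<leftarrow>S. log 2 (wint w f x / min (w f) (w x))) \<in> (\<lambda>(w, f). \<Sum>x\<leftarrow>S. log 2 (wint w f x / min (w f) (w x))) ` (pos_weights n \<times> {1..n})"
    by (rule image_eqI[rotated]) simp
qed

lemma pos_weights_ne: "(\<lambda>_. 1::real) \<in> pos_weights n" by (simp add: pos_weights_def)

lemma wint_le_totW:
  assumes w: "w \<in> pos_weights n" and f: "f \<in> {1..n}" and x: "x \<in> {1..n}"
  shows "wint w f x \<le> totW n w"
  unfolding wint_def totW_def
proof (rule sum_mono2)
  show "{min f x..max f x} \<subseteq> {1..n}" using f x by auto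
  show "\<And>b. b \<in> {1..n} - {min f x..max f x} \<Longrightarrow> 0 \<le> w b"
    using w unfolding pos_weights_def by (auto intro: less_imp_le)
qed simp

lemma WSF_le_FF:
  assumes S: "set S \<subseteq> {1..n}" and n: "n \<ge> 1"
  shows "WSF n S \<le> 3 * real (FF n S) + real (length S)"
proof -
  have "(bld (\<lambda>_. 1) 1 n, 1) \<in> {T. bst_on n T} \<times> {1..n}" using bld_bst n by auto
  then have "FF n S \<in> (\<lambda>(T, f). \<Sum>x\<leftarrow>S. tdist T f x) ` ({T. bst_on n T} \<times> {1..n})"
    unfolding FF_def using fin_bst by (intro Min_in) auto
  then obtain T f where T: "bst_on n T" and f: "f \<in> {1..n}" and ff: "FF n S = (\<Sum>x\<leftarrow>S. tdist T f x)"
    by auto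
  define w where "w y = (1/8::real)^tdist T f y" for y
  have w: "w \<in> pos_weights n" unfolding pos_weights_def w_def by simp
  have sorted: "sorted_wrt (<) (inorder T)" using T unfolding bst_on_def by (metis sorted_wrt_upt)
  have fT: "f \<in> set_tree T" using T f unfolding bst_on_def set_inorder[symmetric] by auto
  have "totW n w = (\<Sum>y\<leftarrow>inorder T. w y)" using T unfolding totW_list bst_on_def by simp
  also have "\<dots> \<le> 3/2 - (1/6) * (1/8)^tdepth T f" unfolding w_def by (rule Gbound[OF sorted fT])
  also have "\<dots> \<le> 3/2" by simp
  finally have tot: "totW n w \<le> 3/2" .
  have wf: "w f = 1" unfolding w_def by (simp add: tdist_self)
  have "WSF n S \<le> (\<Sum>x\<leftarrow>S. log 2 (wint w f x / min (w f) (w x)))" by (rule WSF_lower[OF S w f])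
  also have "\<dots> \<le> (\<Sum>x\<leftarrow>S. 1 + 3 * real (tdist T f x))"
  proof (rule sum_list_mono)
    fix x assume "x \<in> set S"
    then have x: "x \<in> {1..n}" using S by auto
    define d where "d = tdist T f x"
    have wx: "w x = (1/8)^d" unfolding w_def d_def ..
    have wxp: "w x > 0" "w x \<le> 1" unfolding wx by (auto simp: power_le_one)
    have mn: "min (w f) (w x) = w x" using wf wxp by simp
    have "w x \<le> wint w f x" unfolding wint_def
      by (rule member_le_sum) (auto simp: w_def)
    then have wi: "wint w f x > 0" using wxp by linarith
    have "wint w f x \<le> 2" using wint_le_totW[OF w f x] tot by linarith
    then have "wint w f x / w x \<le> 2 / w x" using wxp by (intro divide_right_mono) auto
    also have "2 / w x = 2 ^ (1 + 3 * d)" unfolding wx by (simp add: power_mult power_one_over)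
    also have "\<dots> = 2 powr real (1 + 3 * d)" by (subst powr_realpow) auto
    finally have le: "wint w f x / w x \<le> 2 powr real (1 + 3 * d)" .
    have "log 2 (wint w f x / w x) \<le> log 2 (2 powr real (1 + 3 * d))"
      using le wi wxp by (intro log_mono) auto
    also have "\<dots> = real (1 + 3 * d)" by simp
    finally show "log 2 (wint w f x / min (w f) (w x)) \<le> 1 + 3 * real (tdist T f x)"
      unfolding mn d_def by simp
  qed
  also have "\<dots> = 1 * real (length S) + 3 * (\<Sum>x\<leftarrow>S. real (tdist T f x))"
    by (rule sum_list_affine)
  also have "(\<Sum>x\<leftarrow>S. real (tdist T f x)) = real (FF n S)" unfolding ff by (rule real_sum_list[symmetric])
  finally show ?thesis by simp
qed

lemma WB_le_WSF:
  assumes S: "set S \<subseteq> {1..n}" and n: "n \<ge> 1"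
  shows "WB n S \<le> 2 * WSF n S + 2 * real (length S)"
proof -
  have "(WB n S - 2 * real (length S)) / 2 \<le> WSF n S"
    unfolding WSF_def
  proof (rule cInf_greatest)
    show "(\<lambda>(w, f). \<Sum>x\<leftarrow>S. log 2 (wint w f x / min (w f) (w x))) ` (pos_weights n \<times> {1..n}) \<noteq> {}"
      by (rule WSF_set_ne[OF n])
    fix v assume "v \<in> (\<lambda>(w, f). \<Sum>x\<leftarrow>S. log 2 (wint w f x / min (w f) (w x))) ` (pos_weights n \<times> {1..n})"
    then obtain p where p: "p \<in> pos_weights n \<times> {1..n}"
      and vp: "v = (\<lambda>(w, f). \<Sum>x\<leftarrow>S. log 2 (wint w f x / min (w f) (w x))) p" by (rule imageE)
    obtain w f where pwf: "p = (w, f)" by (cases p)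
    have w: "w \<in> pos_weights n" and f: "f \<in> {1..n}" using p unfolding pwf by auto
    have v: "v = (\<Sum>x\<leftarrow>S. log 2 (wint w f x / min (w f) (w x)))" using vp unfolding pwf by simp
    have wpos: "\<forall>i\<in>{1..n}. w i > 0" using w unfolding pos_weights_def by simp
    have wf: "w f > 0" using wpos f by blast
    define w' where "w' x = w x * w f / (wint w f x)^2" for x
    have wint_ge: "w x \<le> wint w f x" if x: "x \<in> {1..n}" for x
    proof -
      have nn: "\<forall>i\<in>{min f x..max f x}. 0 \<le> w i"
      proof
        fix i assume "i \<in> {min f x..max f x}"
        then have "i \<in> {1..n}" using f x by auto
        then show "0 \<le> w i" using wpos by (auto intro: less_imp_le)
      qed
      show ?thesis unfolding wint_def by (rule member_le_sum) (use nn in auto)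
    qed
    have w'pos: "w' x > 0" if x: "x \<in> {1..n}" for x
    proof -
      have "w x > 0" using wpos x by blast
      moreover have "wint w f x > 0" using wint_ge[OF x] \<open>w x > 0\<close> by linarith
      ultimately show ?thesis unfolding w'_def using wf by simp
    qed
    have w': "w' \<in> pos_weights n" unfolding pos_weights_def using w'pos by blast
    have tot: "totW n w' \<le> 3" unfolding totW_def w'_def by (rule fingersum[OF f wpos])
    have "WB n S \<le> (\<Sum>x\<leftarrow>S. log 2 (totW n w' / w' x))" by (rule WB_lower[OF S w'])
    also have "\<dots> \<le> (\<Sum>x\<leftarrow>S. 2 + 2 * log 2 (wint w f x / min (w f) (w x)))"
    proof (rule sum_list_mono)
      fix x assume "x \<in> set S"
      then have x: "x \<in> {1..n}" using S by auto
      have wx: "w x > 0" using wpos x by blast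
      let ?m = "min (w f) (w x)"
      have mp: "?m > 0" using wx wf by simp
      have wi: "wint w f x > 0" using wint_ge[OF x] wx by linarith
      define q where "q = wint w f x / ?m"
      have qp: "q > 0" unfolding q_def using wi mp by simp
      have tp: "totW n w' \<ge> w' x" unfolding totW_def
        by (rule member_le_sum) (use x w'pos in \<open>auto intro: less_imp_le\<close>)
      have w'x: "w' x > 0" using w'pos[OF x] .
      have w'e: "w' x = w x * w f / (wint w f x)^2" by (simp add: w'_def)
      have le: "totW n w' / w' x \<le> 4 * q^2" unfolding w'e q_def
        by (rule aux_q) (use mp wi tot in auto)
      have "log 2 (totW n w' / w' x) \<le> 2 + 2 * log 2 q"
        by (rule aux_log[OF _ qp le]) (use tp w'x in auto)
      then show "log 2 (totW n w' / w' x) \<le> 2 + 2 * log 2 (wint w f x / ?m)" unfolding q_def .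
    qed
    also have "\<dots> = 2 * real (length S) + 2 * v" unfolding v by (rule sum_list_affine)
    finally show "(WB n S - 2 * real (length S)) / 2 \<le> v" by simp
  qed
  then show ?thesis by simp
qed

theorem mainTheorem7:
  shows "\<exists>c::real. c > 0 \<and>
    (\<forall>n m :: nat. \<forall>S :: nat list.
       n \<ge> 1 \<longrightarrow> m \<ge> 1 \<longrightarrow> length S = m \<longrightarrow> set S \<subseteq> {1..n} \<longrightarrow>
       (\<forall>X\<in>{WB n S, real (SO n S), WSF n S, real (FF n S)}.
        \<forall>Y\<in>{WB n S, real (SO n S), WSF n S, real (FF n S)}.
          X \<le> c * Y + c * real m))"
proof (intro exI[of _ 100] conjI allI impI)
  fix n m :: nat and S :: "nat list"
  assume n: "n \<ge> 1" and m: "m \<ge> 1" and len: "length S = m" and S: "set S \<subseteq> {1..n}"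
  have 1: "WB n S \<le> 2 * WSF n S + 2 * real m" using WB_le_WSF[OF S n] len by simp
  have 2: "WSF n S \<le> 3 * real (FF n S) + real m" using WSF_le_FF[OF S n] len by simp
  have 3: "real (FF n S) \<le> real (SO n S)" using FF_le_SO[OF n] by simp
  have 4: "real (SO n S) \<le> WB n S" by (rule SO_le_WB[OF S])
  have 5: "0 \<le> WSF n S" by (rule WSF_nonneg[OF S n])
  have 6: "0 \<le> real (FF n S)" by simp
  have 7: "0 \<le> real m" by simp
  show "\<forall>X\<in>{WB n S, real (SO n S), WSF n S, real (FF n S)}.
        \<forall>Y\<in>{WB n S, real (SO n S), WSF n S, real (FF n S)}. X \<le> 100 * Y + 100 * real m"
    using 1 2 3 4 5 6 7 unfolding ball_simps by (intro conjI TrueI) linarith+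
qed simp

end
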